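(* For each $p\ge2$ let $y=(y_1,\dots,y_p)$ with $y_i=\mu_i+\epsilon_i$, $\epsilon_i$ i.i.d. $N(0,1)$, where $\mu_1=r\sqrt{2\log p}$ for a fixed constant $r>1$ and $\mu_i=0$ for $i\ge2$. Let $\lambda_1\ge\lambda_2$ be the two largest values among $|y_1|,\dots,|y_p|$, and let $\tilde\Phi=1-\Phi$ be the standard Gaussian survival function. Then the $p$-value $\tilde\Phi(\lambda_1)/\tilde\Phi(\lambda_2)$ converges to $0$ in probability as $p\to\infty$; in particular, for every fixed $\alpha\in(0,1)$, $\Pr\big(\tilde\Phi(\lambda_1)/\tilde\Phi(\lambda_2)\le\alpha\big)\to1$.
   Context: This is the setting of groups of size one with an orthonormal design reduced to the identity design $X=I_p$, $n=p$; here $\lambda_1,\lambda_2$ are the first two knots of the LASSO solution path and $\tilde\Phi(\lambda_1)/\tilde\Phi(\lambda_2)$ is the first-step truncated-$\chi$ $p$-value. *)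

theory Defs
  imports "HOL-Probability.Probability"
begin

definition std_normal :: "real measure" where
  "std_normal = density lborel std_normal_density"

definition Phi_tilde :: "real \<Rightarrow> real" where
  "Phi_tilde x = measure std_normal {x<..}"

text \<open>Sample space for dimension p: noise vector (eps_0,...,eps_{p-1}) i.i.d. N(0,1).\<close>
definition noise_space :: "nat \<Rightarrow> (nat \<Rightarrow> real) measure" where
  "noise_space p = PiM {..<p} (\<lambda>_. std_normal)"

definition mu :: "real \<Rightarrow> nat \<Rightarrow> nat \<Rightarrow> real" where
  "mu r p i = (if i = 0 then r * sqrt (2 * ln (real p)) else 0)"

definition obs :: "real \<Rightarrow> nat \<Rightarrow> (nat \<Rightarrow> real) \<Rightarrow> nat \<Rightarrow> real" where
  "obs r p eps i = mu r p i + eps i"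

text \<open>k-th largest value (0-based, counted with multiplicity) of |y_0|,...,|y_{p-1}|.\<close>
definition knot :: "nat \<Rightarrow> (nat \<Rightarrow> real) \<Rightarrow> nat \<Rightarrow> real" where
  "knot p y k = rev (sort (map (\<lambda>i. \<bar>y i\<bar>) [0..<p])) ! k"

definition pval :: "real \<Rightarrow> nat \<Rightarrow> (nat \<Rightarrow> real) \<Rightarrow> real" where
  "pval r p eps = Phi_tilde (knot p (obs r p eps) 0) / Phi_tilde (knot p (obs r p eps) 1)"

end

theory Submission
  imports Defs "HOL-Real_Asymp.Real_Asymp"
begin


lemma nn_std: "(\<integral>\<^sup>+x. ennreal (std_normal_density x) \<partial>lborel) = 1"
  by (subst nn_integral_eq_integral) (auto simp: normal_density_nonneg)

lemma nn_std_shift: "(\<integral>\<^sup>+x. ennreal (std_normal_density (x + a)) \<partial>lborel) = 1"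
proof -
  have "(\<integral>\<^sup>+x. ennreal (std_normal_density x) \<partial>lborel) = ennreal \<bar>1\<bar> * (\<integral>\<^sup>+x. ennreal (std_normal_density (a + 1 * x)) \<partial>lborel)"
    by (rule nn_integral_real_affine) auto
  then show ?thesis using nn_std by (simp add: add.commute)
qed

lemma prob_std: "prob_space std_normal"
  unfolding std_normal_def by (simp add: prob_space_normal_density)

lemma dens_le: 
  assumes "0 \<le> x" "x \<le> t"
  shows "std_normal_density t \<le> exp (- x\<^sup>2/2) * std_normal_density (t - x)"
proof -
  have "t\<^sup>2 \<ge> x\<^sup>2 + (t-x)\<^sup>2" using assms by (simp add: power2_eq_square algebra_simps mult_mono)
  then have "exp (- t\<^sup>2/2) \<le> exp (- x\<^sup>2/2) * exp (- (t-x)\<^sup>2/2)"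
    by (simp add: exp_add[symmetric])
  then show ?thesis unfolding std_normal_density_def by (simp add: divide_right_mono)
qed

lemma tail_bound:
  assumes "0 \<le> x"
  shows "measure std_normal {t. x < \<bar>t\<bar>} \<le> 2 * exp (- x\<^sup>2/2)"
proof -
  let ?e = "exp (- x\<^sup>2/2)"
  have meas: "{t::real. x < \<bar>t\<bar>} \<in> sets borel" by measurable
  have "emeasure std_normal {t. x < \<bar>t\<bar>} = (\<integral>\<^sup>+t. ennreal (std_normal_density t) * indicator {t. x < \<bar>t\<bar>} t \<partial>lborel)"
    unfolding std_normal_def using meas by (subst emeasure_density) auto
  also have "\<dots> \<le> (\<integral>\<^sup>+t. ennreal ?e * ennreal (std_normal_density (t + (-x))) + ennreal ?e * ennreal (std_normal_density (t + x)) \<partial>lborel)"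
  proof (rule nn_integral_mono)
    fix t :: real
    show "ennreal (std_normal_density t) * indicator {t. x < \<bar>t\<bar>} t \<le> ennreal ?e * ennreal (std_normal_density (t + (-x))) + ennreal ?e * ennreal (std_normal_density (t + x))"
    proof (cases "x < \<bar>t\<bar>")
      case True
      have "std_normal_density t \<le> ?e * std_normal_density (t + (-x)) + ?e * std_normal_density (t + x)"
      proof (cases "t \<ge> 0")
        case True
        with \<open>x < \<bar>t\<bar>\<close> have "std_normal_density t \<le> ?e * std_normal_density (t - x)" using dens_le assms by simp
        moreover have "0 \<le> ?e * std_normal_density (t + x)" by simp
        ultimately show ?thesis by (simp only: diff_conv_add_uminus; linarith)
      next
        case False
        with \<open>x < \<bar>t\<bar>\<close> have "std_normal_density (-t) \<le> ?e * std_normal_density (-t - x)" using dens_le assms by simp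
        moreover have "std_normal_density (-t) = std_normal_density t" "std_normal_density (-t - x) = std_normal_density (t + x)"
          unfolding std_normal_density_def by (simp_all add: power2_eq_square algebra_simps)
        moreover have "0 \<le> ?e * std_normal_density (t - x)" by simp
        ultimately show ?thesis by (simp only: diff_conv_add_uminus; linarith)
      qed
      then show ?thesis using True
        by (simp add: ennreal_mult'[symmetric] ennreal_plus[symmetric] del: ennreal_plus)
    qed simp
  qed
  also have "\<dots> = ennreal ?e * (\<integral>\<^sup>+t. ennreal (std_normal_density (t + (-x))) \<partial>lborel) + ennreal ?e * (\<integral>\<^sup>+t. ennreal (std_normal_density (t + x)) \<partial>lborel)"
    by (subst nn_integral_add) (auto simp: nn_integral_cmult)
  also have "\<dots> = ennreal (2 * ?e)" by (simp only: nn_std_shift) (simp add: ennreal_plus[symmetric] del: ennreal_plus)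
  finally have "emeasure std_normal {t. x < \<bar>t\<bar>} \<le> ennreal (2 * ?e)" .
  then show ?thesis unfolding measure_def by (simp add: enn2real_leI)
qed



lemma knot_le_iff:
  assumes "k < p"
  shows "knot p y k \<le> t \<longleftrightarrow> card {i. i < p \<and> t < \<bar>y i\<bar>} \<le> k"
proof -
  define L where "L = map (\<lambda>i. \<bar>y i\<bar>) [0..<p]"
  define D where "D = rev (sort L)"
  have lenD: "length D = p" by (simp add: D_def L_def)
  have kn: "knot p y k = D ! k" by (simp add: knot_def D_def L_def)
  have srt: "sorted_wrt (\<lambda>a b. b \<le> a) D" unfolding D_def
    by (simp add: sorted_wrt_rev)
  have mono: "D ! j \<le> D ! i" if "i \<le> j" "j < p" for i j
  proof (cases "i = j")
    case False
    then show ?thesis using sorted_wrt_nth_less[OF srt, of i j] that lenD by simp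
  qed simp
  have c1: "card {i. i < p \<and> t < \<bar>y i\<bar>} = length (filter ((<) t) L)"
    by (simp add: L_def length_filter_conv_card cong: conj_cong)
  have "length (filter ((<) t) D) = length (filter ((<) t) L)"
  proof -
    have "mset D = mset L" by (simp add: D_def)
    then have "mset (filter ((<) t) D) = mset (filter ((<) t) L)" by (simp add: mset_filter)
    then show ?thesis by (metis size_mset)
  qed
  moreover have "length (filter ((<) t) D) = card {j. j < p \<and> t < D ! j}"
    by (simp add: length_filter_conv_card lenD)
  ultimately have c2: "card {i. i < p \<and> t < \<bar>y i\<bar>} = card {j. j < p \<and> t < D ! j}" using c1 by simp
  show ?thesis
  proof
    assume "knot p y k \<le> t"
    then have "{j. j < p \<and> t < D ! j} \<subseteq> {..<k}"
      using mono kn by (auto simp: not_less intro: order_trans) (meson le_less_trans not_less order_trans)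
    then show "card {i. i < p \<and> t < \<bar>y i\<bar>} \<le> k" using c2
      by (metis card_lessThan card_mono finite_lessThan)
  next
    assume a: "card {i. i < p \<and> t < \<bar>y i\<bar>} \<le> k"
    show "knot p y k \<le> t"
    proof (rule ccontr)
      assume "\<not> knot p y k \<le> t"
      then have "{..k} \<subseteq> {j. j < p \<and> t < D ! j}"
        using mono kn assms by auto (meson le_less_trans less_le_trans not_le)+
      then have "card {..k} \<le> card {j. j < p \<and> t < D ! j}" by (intro card_mono) auto
      then show False using a c2 by simp
    qed
  qed
qed



lemma sets_std: "sets std_normal = sets borel"
  by (simp add: std_normal_def)

lemma comp_meas: "i < p \<Longrightarrow> (\<lambda>w. w i) \<in> borel_measurable (noise_space p)"
proof -
  assume "i < p"
  have "(\<lambda>w. w i) \<in> noise_space p \<rightarrow>\<^sub>M std_normal"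
    unfolding noise_space_def by (rule measurable_component_singleton) (use \<open>i < p\<close> in simp)
  then show ?thesis using measurable_cong_sets[OF refl sets_std, of "noise_space p"] by simp
qed

lemma obs_meas: "i < p \<Longrightarrow> (\<lambda>w. obs r p w i) \<in> borel_measurable (noise_space p)"
  unfolding obs_def using comp_meas by measurable

lemma card_sum: "real (card {i. i < (p::nat) \<and> P i}) = (\<Sum>i<p. if P i then 1 else 0)"
proof -
  have "{i. i < p \<and> P i} = {i\<in>{..<p}. P i}" by auto
  moreover have "real (card {i\<in>{..<p}. P i}) = (\<Sum>i\<in>{i\<in>{..<p}. P i}. 1)" by simp
  moreover have "(\<Sum>i\<in>{i\<in>{..<p}. P i}. 1::real) = (\<Sum>i<p. if P i then 1 else 0)"
    by (rule sum.inter_filter) auto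
  ultimately show ?thesis by simp
qed

lemma knot_meas:
  assumes "k < p"
  shows "(\<lambda>w. knot p (obs r p w) k) \<in> borel_measurable (noise_space p)"
proof (subst borel_measurable_iff_le, intro allI)
  fix a
  have "{w \<in> space (noise_space p). knot p (obs r p w) k \<le> a}
     = {w \<in> space (noise_space p). (\<Sum>i<p. if a < \<bar>obs r p w i\<bar> then 1 else 0) \<le> real k}"
    using knot_le_iff[OF assms] by (simp add: card_sum[symmetric])
  also have "\<dots> \<in> sets (noise_space p)"
  proof -
    have "(\<lambda>w. (\<Sum>i<p. if a < \<bar>obs r p w i\<bar> then 1 else 0::real)) \<in> borel_measurable (noise_space p)"
      by (intro borel_measurable_sum) (use obs_meas in measurable)
    then show ?thesis by measurable
  qed
  finally show "{w \<in> space (noise_space p). knot p (obs r p w) k \<le> a} \<in> sets (noise_space p)" .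
qed

lemma Phi_anti: "x \<le> y \<Longrightarrow> Phi_tilde y \<le> Phi_tilde x"
proof -
  assume "x \<le> y"
  interpret prob_space std_normal using prob_space_normal_density[of 1 0] by (simp add: std_normal_def)
  show ?thesis unfolding Phi_tilde_def
    by (rule finite_measure_mono) (use \<open>x \<le> y\<close> sets_std in auto)
qed

lemma Phi_meas: "Phi_tilde \<in> borel_measurable borel"
proof -
  have "(\<lambda>x. - Phi_tilde x) \<in> borel_measurable borel"
    by (rule borel_measurable_mono) (auto simp: mono_def Phi_anti)
  then have "(\<lambda>x. - (- Phi_tilde x)) \<in> borel_measurable borel" by measurable
  then show ?thesis by simp
qed

lemma pval_meas:
  assumes "2 \<le> p"
  shows "pval r p \<in> borel_measurable (noise_space p)"
proof -
  have [measurable]: "(\<lambda>w. knot p (obs r p w) 0) \<in> borel_measurable (noise_space p)"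
    "(\<lambda>w. knot p (obs r p w) 1) \<in> borel_measurable (noise_space p)"
    using knot_meas assms by auto
  have [measurable]: "Phi_tilde \<in> borel_measurable borel" by (rule Phi_meas)
  show ?thesis unfolding pval_def[abs_def] by measurable
qed



lemma Phi_lower:
  assumes "0 \<le> c"
  shows "std_normal_density (c+1) \<le> Phi_tilde c"
proof -
  interpret prob_space std_normal by (rule prob_std)
  let ?d = "std_normal_density (c+1)"
  have "ennreal ?d = (\<integral>\<^sup>+t. ennreal ?d * indicator {c<..c+1} t \<partial>lborel)"
    by (simp add: nn_integral_cmult_indicator)
  also have "\<dots> \<le> (\<integral>\<^sup>+t. ennreal (std_normal_density t) * indicator {c<..} t \<partial>lborel)"
  proof (rule nn_integral_mono)
    fix t :: real
    show "ennreal ?d * indicator {c<..c+1} t \<le> ennreal (std_normal_density t) * indicator {c<..} t"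
    proof (cases "t \<in> {c<..c+1}")
      case True
      then have "t\<^sup>2 \<le> (c+1)\<^sup>2" using assms by (intro power_mono) auto
      then have "?d \<le> std_normal_density t" unfolding std_normal_density_def
        by (intro mult_left_mono) auto
      then show ?thesis using True by (auto simp: indicator_def)
    qed (simp add: indicator_def)
  qed
  also have "\<dots> = emeasure std_normal {c<..}"
    unfolding std_normal_def by (subst emeasure_density) auto
  finally show ?thesis unfolding Phi_tilde_def by (simp add: emeasure_eq_measure)
qed

lemma Phi_upper:
  assumes "0 \<le> a"
  shows "Phi_tilde a \<le> 2 * exp (- a\<^sup>2/2)"
proof -
  interpret prob_space std_normal by (rule prob_std)
  have "Phi_tilde a \<le> measure std_normal {t. a < \<bar>t\<bar>}" unfolding Phi_tilde_def
    by (rule finite_measure_mono) (auto simp: sets_std)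
  then show ?thesis using tail_bound[OF assms] by linarith
qed

lemma Phi_nonneg: "0 \<le> Phi_tilde x" by (simp add: Phi_tilde_def)

lemma marg_bound:
  assumes "i < p" "0 \<le> x"
  shows "measure (noise_space p) {w \<in> space (noise_space p). x < \<bar>w i\<bar>} \<le> 2 * exp (- x\<^sup>2/2)"
proof -
  interpret product_prob_space "\<lambda>_. std_normal" "{..<p}"
    by (simp add: product_prob_space_def product_sigma_finite_def prob_std prob_space_imp_sigma_finite product_prob_space_axioms_def)
  have "emeasure (noise_space p) {w \<in> space (noise_space p). w i \<in> {t. x < \<bar>t\<bar>}} = emeasure std_normal {t. x < \<bar>t\<bar>}"
    unfolding noise_space_def by (rule emeasure_PiM_Collect_single) (use assms in \<open>auto simp: sets_std\<close>)
  then have "measure (noise_space p) {w \<in> space (noise_space p). x < \<bar>w i\<bar>} = measure std_normal {t. x < \<bar>t\<bar>}"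
    by (simp add: measure_def)
  then show ?thesis using tail_bound[OF assms(2)] by simp
qed

lemma prob_noise: "prob_space (noise_space p)"
  unfolding noise_space_def by (intro prob_space_PiM prob_std)



lemma knot0_ge:
  assumes "0 < p" shows "\<bar>y 0\<bar> \<le> knot p y 0"
proof (rule ccontr)
  assume "\<not> \<bar>y 0\<bar> \<le> knot p y 0"
  then have "card {i. i < p \<and> knot p y 0 < \<bar>y i\<bar>} \<le> 0"
    using knot_le_iff[OF assms, of y "knot p y 0"] by simp
  moreover have "0 \<in> {i. i < p \<and> knot p y 0 < \<bar>y i\<bar>}" using assms \<open>\<not> _\<close> by auto
  moreover have "finite {i. i < p \<and> knot p y 0 < \<bar>y i\<bar>}" by simp
  ultimately show False by (metis card_0_eq empty_iff le_zero_eq)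
qed

lemma knot1_le:
  assumes "1 < p" "\<forall>i. 1 \<le> i \<and> i < p \<longrightarrow> \<bar>y i\<bar> \<le> c"
  shows "knot p y 1 \<le> c"
proof -
  have "{i. i < p \<and> c < \<bar>y i\<bar>} \<subseteq> {0}"
  proof
    fix i assume "i \<in> {i. i < p \<and> c < \<bar>y i\<bar>}"
    then show "i \<in> {0}" using assms(2)[rule_format, of i] by (cases i) auto
  qed
  then have "card {i. i < p \<and> c < \<bar>y i\<bar>} \<le> 1"
    by (metis card.empty card.insert card_mono empty_iff finite.emptyI finite.insertI One_nat_def)
  then show ?thesis using knot_le_iff[OF assms(1)] by blast
qed

lemma pval_bound:
  assumes "1 < p" "a \<le> \<bar>obs r p w 0\<bar>" "\<forall>i. 1 \<le> i \<and> i < p \<longrightarrow> \<bar>obs r p w i\<bar> \<le> c"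
    "0 < Phi_tilde c"
  shows "pval r p w \<le> Phi_tilde a / Phi_tilde c"
proof -
  have k0: "a \<le> knot p (obs r p w) 0" using knot0_ge[of p "obs r p w"] assms by simp
  have k1: "knot p (obs r p w) 1 \<le> c" using knot1_le assms by blast
  show ?thesis unfolding pval_def
    by (rule frac_le) (use Phi_anti Phi_nonneg k0 k1 assms(4) in auto)
qed

lemma pval_nonneg: "0 \<le> pval r p w"
  unfolding pval_def by (simp add: Phi_nonneg)



lemma quad_lim:
  fixes s :: "'a \<Rightarrow> real"
  assumes s: "filterlim s at_top F" and A: "A < 0"
  shows "((\<lambda>x. exp (A * (s x)\<^sup>2 + B * s x + C)) \<longlongrightarrow> 0) F"
proof -
  have si: "filterlim s at_infinity F" using s by (rule filterlim_at_top_imp_at_infinity)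
  have s2: "filterlim (\<lambda>x. (s x)\<^sup>2) at_top F" using s by (intro filterlim_pow_at_top) auto
  have s2i: "filterlim (\<lambda>x. (s x)\<^sup>2) at_infinity F" using s2 by (rule filterlim_at_top_imp_at_infinity)
  have b: "((\<lambda>x. B / s x) \<longlongrightarrow> 0) F" by (rule tendsto_divide_0[OF tendsto_const si])
  have c: "((\<lambda>x. C / (s x)\<^sup>2) \<longlongrightarrow> 0) F" by (rule tendsto_divide_0[OF tendsto_const s2i])
  have 1: "((\<lambda>x. A + B / s x + C / (s x)\<^sup>2) \<longlongrightarrow> A + 0 + 0) F"
    by (intro tendsto_add tendsto_const b c)
  have 2: "filterlim (\<lambda>x. (A + B / s x + C / (s x)\<^sup>2) * (s x)\<^sup>2) at_bot F"
    by (rule filterlim_tendsto_neg_mult_at_bot[OF 1 _ s2]) (use A in simp)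
  have ev: "eventually (\<lambda>x. s x > 0) F" using s by (simp add: filterlim_at_top_dense)
  have 3: "filterlim (\<lambda>x. A * (s x)\<^sup>2 + B * s x + C) at_bot F"
    by (rule filterlim_cong[THEN iffD1, OF refl refl _ 2])
       (use ev in \<open>eventually_elim, simp add: field_simps power2_eq_square\<close>)
  show ?thesis by (rule filterlim_compose[OF exp_at_bot 3])
qed

lemma s_lim: "filterlim (\<lambda>p::nat. sqrt (2 * ln (real p))) at_top sequentially"
  by real_asymp



lemma per_p:
  assumes p: "2 \<le> p" and e: "0 < e" and r: "r = 1 + 3*e"
    and sv: "sv = sqrt (2 * ln (real p))"
    and t: "2 * exp (- ((1+2*e)* sv)\<^sup>2/2) / std_normal_density ((1+e)* sv+1) \<le> t"
  shows "measure (noise_space p) {w \<in> space (noise_space p). t < \<bar>pval r p w\<bar>}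
           \<le> 2 * exp (- (e* sv)\<^sup>2/2) + real p * (2 * exp (- ((1+e)* sv)\<^sup>2/2))"
    and "1 - (2 * exp (- (e* sv)\<^sup>2/2) + real p * (2 * exp (- ((1+e)* sv)\<^sup>2/2)))
           \<le> measure (noise_space p) {w \<in> space (noise_space p). pval r p w \<le> t}"
proof -
  interpret prob_space "noise_space p" by (rule prob_noise)
  let ?M = "noise_space p"
  have s0: "0 \<le> sv" using sv p by simp
  define thr where "thr i = (if i = 0 then e* sv else (1+e)* sv)" for i :: nat
  define Bad where "Bad = (\<Union>i\<in>{..<p}. {w \<in> space ?M. thr i < \<bar>w i\<bar>})"
  have Ei: "{w \<in> space ?M. thr i < \<bar>w i\<bar>} \<in> sets ?M" if "i < p" for i
  proof -
    have [measurable]: "(\<lambda>w. w i) \<in> borel_measurable ?M" using comp_meas that by blast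
    show ?thesis by measurable
  qed
  have Bad_sets: "Bad \<in> sets ?M" unfolding Bad_def using Ei by blast
  have "measure ?M Bad \<le> (\<Sum>i<p. measure ?M {w \<in> space ?M. thr i < \<bar>w i\<bar>})"
    unfolding Bad_def by (rule measure_UNION_le) (use Ei in auto)
  also have "\<dots> \<le> (\<Sum>i<p. (if i = 0 then 2 * exp (- (e* sv)\<^sup>2/2) else 0) + 2 * exp (- ((1+e)* sv)\<^sup>2/2))"
  proof (rule sum_mono)
    fix i assume "i \<in> {..<p}"
    then have "measure ?M {w \<in> space ?M. thr i < \<bar>w i\<bar>} \<le> 2 * exp (- (thr i)\<^sup>2/2)"
      using marg_bound[of i p "thr i"] s0 e by (auto simp: thr_def)
    then show "measure ?M {w \<in> space ?M. thr i < \<bar>w i\<bar>} \<le> (if i = 0 then 2 * exp (- (e* sv)\<^sup>2/2) else 0) + 2 * exp (- ((1+e)* sv)\<^sup>2/2)"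
      by (auto simp: thr_def intro: add_increasing2)
  qed
  also have "\<dots> = 2 * exp (- (e* sv)\<^sup>2/2) + real p * (2 * exp (- ((1+e)* sv)\<^sup>2/2))"
    using p by (simp add: sum.distrib)
  finally have bad_le: "measure ?M Bad \<le> 2 * exp (- (e* sv)\<^sup>2/2) + real p * (2 * exp (- ((1+e)* sv)\<^sup>2/2))" .
  have good: "pval r p w \<le> t" if w: "w \<in> space ?M" "w \<notin> Bad" for w
  proof -
    have h: "\<not> thr i < \<bar>w i\<bar>" if "i < p" for i using w that unfolding Bad_def by blast
    have w0: "\<bar>w 0\<bar> \<le> e* sv" using h[of 0] p by (simp add: thr_def)
    have wi: "\<forall>i. 1 \<le> i \<and> i < p \<longrightarrow> \<bar>obs r p w i\<bar> \<le> (1+e)* sv"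
    proof (intro allI impI)
      fix i assume "1 \<le> i \<and> i < p"
      then show "\<bar>obs r p w i\<bar> \<le> (1+e) * sv" using h[of i] by (simp add: thr_def obs_def mu_def)
    qed
    have "(1+2*e)* sv \<le> \<bar>obs r p w 0\<bar>"
    proof -
      have "obs r p w 0 = r * sv + w 0" by (simp add: obs_def mu_def sv)
      moreover have "r * sv = (1+2*e)* sv + e* sv" using r by (simp add: algebra_simps)
      ultimately show ?thesis using w0 by auto
    qed
    have c0: "0 \<le> (1+e)* sv" using e s0 by simp
    have dpos: "0 < std_normal_density ((1+e)* sv+1)" by (simp add: std_normal_density_def)
    have Pc: "std_normal_density ((1+e)* sv+1) \<le> Phi_tilde ((1+e)* sv)" by (rule Phi_lower[OF c0])
    have "pval r p w \<le> Phi_tilde ((1+2*e)* sv) / Phi_tilde ((1+e)* sv)"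
      by (rule pval_bound) (use p \<open>(1+2*e)* sv \<le> _\<close> wi Pc dpos in auto)
    also have "\<dots> \<le> 2 * exp (- ((1+2*e)* sv)\<^sup>2/2) / std_normal_density ((1+e)* sv+1)"
      by (rule frac_le) (use Phi_upper[of "(1+2*e)* sv"] e s0 Pc dpos Phi_nonneg in auto)
    finally show ?thesis using t by simp
  qed
  have "{w \<in> space ?M. t < \<bar>pval r p w\<bar>} \<subseteq> Bad"
    using good pval_nonneg by force
  then have "measure ?M {w \<in> space ?M. t < \<bar>pval r p w\<bar>} \<le> measure ?M Bad"
    by (rule finite_measure_mono) (rule Bad_sets)
  then show "measure ?M {w \<in> space ?M. t < \<bar>pval r p w\<bar>}
           \<le> 2 * exp (- (e* sv)\<^sup>2/2) + real p * (2 * exp (- ((1+e)* sv)\<^sup>2/2))" using bad_le by linarith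
  have [measurable]: "pval r p \<in> borel_measurable ?M" by (rule pval_meas[OF p])
  have "space ?M - Bad \<subseteq> {w \<in> space ?M. pval r p w \<le> t}" using good by auto
  then have "measure ?M (space ?M - Bad) \<le> measure ?M {w \<in> space ?M. pval r p w \<le> t}"
    by (rule finite_measure_mono) measurable
  moreover have "measure ?M (space ?M - Bad) = 1 - measure ?M Bad" by (rule prob_compl[OF Bad_sets])
  ultimately show "1 - (2 * exp (- (e* sv)\<^sup>2/2) + real p * (2 * exp (- ((1+e)* sv)\<^sup>2/2)))
           \<le> measure ?M {w \<in> space ?M. pval r p w \<le> t}" using bad_le by linarith
qed



lemma beta_lim:
  assumes e: "0 < e"
  shows "(\<lambda>p::nat. 2 * exp (- (e * sqrt (2 * ln (real p)))\<^sup>2/2)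
     + real p * (2 * exp (- ((1+e) * sqrt (2 * ln (real p)))\<^sup>2/2))) \<longlonglongrightarrow> 0"
proof -
  have lim: "(\<lambda>p::nat. 2 * real p powr (- e\<^sup>2) + 2 * real p powr (1 - (1+e)\<^sup>2)) \<longlonglongrightarrow> 2 * 0 + 2 * 0"
  proof (intro tendsto_add tendsto_mult tendsto_const)
    show "(\<lambda>p::nat. real p powr (- e\<^sup>2)) \<longlonglongrightarrow> 0"
      by (rule tendsto_neg_powr[OF _ filterlim_real_sequentially]) (use e in simp)
    have "1 < (1+e)\<^sup>2" using e by (simp add: power2_eq_square algebra_simps) (smt (verit) e mult_pos_pos)
    then show "(\<lambda>p::nat. real p powr (1 - (1+e)\<^sup>2)) \<longlonglongrightarrow> 0"
      by (intro tendsto_neg_powr[OF _ filterlim_real_sequentially]) simp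
  qed
  have eq: "2 * exp (- (x * sqrt (2 * ln (real p)))\<^sup>2/2) = 2 * real p powr (- x\<^sup>2)" if "1 \<le> p" for x p
  proof -
    have "0 \<le> ln (real p)" using that by simp
    then have "(x * sqrt (2 * ln (real p)))\<^sup>2/2 = x\<^sup>2 * ln (real p)"
      by (simp add: power_mult_distrib)
    then show ?thesis using that by (simp add: powr_def)
  qed
  have ev: "eventually (\<lambda>p. 2 * real p powr (- e\<^sup>2) + 2 * real p powr (1 - (1+e)\<^sup>2) =
      2 * exp (- (e * sqrt (2 * ln (real p)))\<^sup>2/2)
     + real p * (2 * exp (- ((1+e) * sqrt (2 * ln (real p)))\<^sup>2/2))) sequentially"
    using eventually_ge_at_top[of "1::nat"]
  proof eventually_elim
    case (elim p)
    have "real p * real p powr (- (1+e)\<^sup>2) = real p powr (1 - (1+e)\<^sup>2)"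
      using elim by (simp add: powr_diff powr_minus_divide)
    then show ?case using eq[OF elim, of e] eq[OF elim, of "1+e"] by (simp add: algebra_simps)
  qed
  show ?thesis using Lim_transform_eventually[OF lim ev] by simp
qed

lemma B_lim:
  assumes e: "0 < e"
  shows "(\<lambda>p::nat. 2 * exp (- ((1+2*e) * sqrt (2 * ln (real p)))\<^sup>2/2)
     / std_normal_density ((1+e) * sqrt (2 * ln (real p)) + 1)) \<longlonglongrightarrow> 0"
proof -
  define A where "A = ((1+e)\<^sup>2 - (1+2*e)\<^sup>2) / 2"
  have A: "A < 0" using e unfolding A_def by (simp add: power2_eq_square algebra_simps) (smt (verit) e mult_pos_pos)
  have eq: "2 * exp (- ((1+2*e) * x)\<^sup>2/2) / std_normal_density ((1+e) * x + 1)
      = 2 * sqrt (2*pi) * exp (A * x\<^sup>2 + (1+e) * x + 1/2)" for x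
  proof -
    have "((1+e) * x + 1)\<^sup>2 / 2 - ((1+2*e) * x)\<^sup>2/2 = A * x\<^sup>2 + (1+e) * x + 1/2"
      unfolding A_def by (simp add: power2_eq_square algebra_simps add_divide_distrib diff_divide_distrib)
    then have "exp (- ((1+2*e) * x)\<^sup>2/2) / exp (- ((1+e) * x + 1)\<^sup>2 / 2) = exp (A * x\<^sup>2 + (1+e) * x + 1/2)"
      by (simp add: exp_diff[symmetric])
    then show ?thesis unfolding std_normal_density_def by (simp add: field_simps)
  qed
  have L: "(\<lambda>p::nat. 2 * sqrt (2*pi) * exp (A * (sqrt (2 * ln (real p)))\<^sup>2 + (1+e) * sqrt (2 * ln (real p)) + 1/2)) \<longlonglongrightarrow> 2 * sqrt (2*pi) * 0"
    by (intro tendsto_mult tendsto_const quad_lim[OF s_lim A])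
  show ?thesis unfolding eq using L by simp
qed

theorem mainTheorem3:
  fixes r :: real
  assumes "r > 1"
  shows "(\<forall>e>0. (\<lambda>p. measure (noise_space p)
                   {eps \<in> space (noise_space p). \<bar>pval r p eps\<bar> > e}) \<longlonglongrightarrow> 0)
       \<and> (\<forall>\<alpha>. 0 < \<alpha> \<and> \<alpha> < 1 \<longrightarrow>
           (\<lambda>p. measure (noise_space p)
                   {eps \<in> space (noise_space p). pval r p eps \<le> \<alpha>}) \<longlonglongrightarrow> 1)"
proof -
  define e where "e = (r - 1) / 3"
  have e: "0 < e" using assms by (simp add: e_def)
  have r: "r = 1 + 3 * e" by (simp add: e_def field_simps)
  let ?sv = "\<lambda>p::nat. sqrt (2 * ln (real p))"
  let ?beta = "\<lambda>p::nat. 2 * exp (- (e * ?sv p)\<^sup>2/2) + real p * (2 * exp (- ((1+e) * ?sv p)\<^sup>2/2))"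
  let ?B = "\<lambda>p::nat. 2 * exp (- ((1+2*e) * ?sv p)\<^sup>2/2) / std_normal_density ((1+e) * ?sv p + 1)"
  have bl: "?beta \<longlonglongrightarrow> 0" by (rule beta_lim[OF e])
  have Bl: "?B \<longlonglongrightarrow> 0" by (rule B_lim[OF e])
  have ev_t: "eventually (\<lambda>p. 2 \<le> p \<and> ?B p \<le> t) sequentially" if "0 < t" for t
  proof -
    have "eventually (\<lambda>p. ?B p < t) sequentially" using order_tendstoD(2)[OF Bl that] .
    then show ?thesis using eventually_ge_at_top[of "2::nat"] by eventually_elim auto
  qed
  have part1: "(\<lambda>p. measure (noise_space p)
                   {eps \<in> space (noise_space p). \<bar>pval r p eps\<bar> > t}) \<longlonglongrightarrow> 0" if t: "0 < t" for t
  proof (rule tendsto_sandwich[OF _ _ tendsto_const bl])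
    show "eventually (\<lambda>p. 0 \<le> measure (noise_space p) {eps \<in> space (noise_space p). \<bar>pval r p eps\<bar> > t}) sequentially"
      by simp
    show "eventually (\<lambda>p. measure (noise_space p) {eps \<in> space (noise_space p). \<bar>pval r p eps\<bar> > t} \<le> ?beta p) sequentially"
      using ev_t[OF t] by eventually_elim (rule per_p(1)[OF _ e r refl], auto)
  qed
  have part2: "(\<lambda>p. measure (noise_space p)
                   {eps \<in> space (noise_space p). pval r p eps \<le> t}) \<longlonglongrightarrow> 1" if t: "0 < t" for t
  proof (rule tendsto_sandwich[OF _ _ _ tendsto_const])
    have "(\<lambda>p. 1 - ?beta p) \<longlonglongrightarrow> 1 - 0" by (intro tendsto_diff tendsto_const bl)
    then show "(\<lambda>p. 1 - ?beta p) \<longlonglongrightarrow> 1" by simp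
    show "eventually (\<lambda>p. 1 - ?beta p \<le> measure (noise_space p) {eps \<in> space (noise_space p). pval r p eps \<le> t}) sequentially"
      using ev_t[OF t] by eventually_elim (rule per_p(2)[OF _ e r refl], auto)
    show "eventually (\<lambda>p. measure (noise_space p) {eps \<in> space (noise_space p). pval r p eps \<le> t} \<le> 1) sequentially"
      by (intro always_eventually allI prob_space.prob_le_1 prob_noise)
  qed
  show ?thesis using part1 part2 by auto
qed

end
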